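(* In the contention game with $k=2$ channels under acknowledgement-based feedback and $n\in\{2,3,4\}$ players, the anonymous protocol $f^2$ (in every slot, regardless of history, a pending player transmits on each of the two channels with probability $1/2$ and never stays idle) is an equilibrium protocol, with expected latency of each player equal to $2$, $8/3$ and $4$ for $n=2,3,4$ respectively.
   Context: Contention game: $n$ players, channel set $K=\{1,\dots,k\}$, discrete slots $t=1,2,\dots$; each player has one packet and is initially pending. In each slot a pending player chooses (possibly at random) an action in $\{0,1,\dots,k\}$ ($0$ = no transmission, $a$ = transmit on channel $a$). A lone transmitter on a channel succeeds and leaves; two or more transmitters on a channel collide and remain pending. Latency $T_i$ = slot of player $i$'s successful transmission; players minimize expected latency. Acknowledgement-based feedback: only a player who attempted transmission learns whether she succeeded; decision rules depend only on the personal action history. A protocol is a sequence of such decision rules; an anonymous protocol is used by all players and does not depend on identity. It is an equilibrium protocol if, when all players use it, no player at any slot and after any history can decrease her conditional expected latency by unilaterally deviating. *)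

theory Defs
  imports "HOL-Probability.Probability"
begin

text \<open>
A decision rule / protocol maps the personal action history of a pending
player (the list of her past actions; all past transmissions of a pending
player failed, so under acknowledgement-based feedback the action list is the
whole personal history) to a distribution over actions 0..k
(0 = idle, a = transmit on channel a).
A game state maps each player to Some h (pending, with personal history h)
or None (already succeeded).
\<close>

type_synonym protocol = "nat list \<Rightarrow> nat pmf"
type_synonym gstate = "nat \<Rightarrow> nat list option"

definition valid_protocol :: "nat \<Rightarrow> protocol \<Rightarrow> bool" where
  "valid_protocol k f \<longleftrightarrow> (\<forall>h. set_pmf (f h) \<subseteq> {0..k})"

definition init_state :: "nat \<Rightarrow> gstate" where
  "init_state n = (\<lambda>j. if j < n then Some [] else None)"

definition succeeds :: "nat \<Rightarrow> gstate \<Rightarrow> (nat \<Rightarrow> nat) \<Rightarrow> nat \<Rightarrow> bool" where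
  "succeeds k s a j \<longleftrightarrow> 1 \<le> a j \<and> a j \<le> k \<and>
      (\<forall>j'. j' \<noteq> j \<and> s j' \<noteq> None \<longrightarrow> a j' \<noteq> a j)"

definition step :: "nat \<Rightarrow> nat \<Rightarrow> (nat \<Rightarrow> protocol) \<Rightarrow> gstate \<Rightarrow> gstate pmf" where
  "step k n \<sigma> s =
     map_pmf (\<lambda>a j. case s j of None \<Rightarrow> None
                     | Some h \<Rightarrow> if succeeds k s a j then None else Some (h @ [a j]))
       (Pi_pmf {j. j < n \<and> s j \<noteq> None} 0 (\<lambda>j. \<sigma> j (the (s j))))"

primrec run :: "nat \<Rightarrow> nat \<Rightarrow> (nat \<Rightarrow> protocol) \<Rightarrow> gstate pmf \<Rightarrow> nat \<Rightarrow> gstate pmf" where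
  "run k n \<sigma> p 0 = p"
| "run k n \<sigma> p (Suc m) = bind_pmf (run k n \<sigma> p m) (step k n \<sigma>)"

definition state_at :: "nat \<Rightarrow> nat \<Rightarrow> (nat \<Rightarrow> protocol) \<Rightarrow> nat \<Rightarrow> gstate pmf" where
  "state_at k n \<sigma> t = run k n \<sigma> (return_pmf (init_state n)) t"

text \<open>Expected latency of player i: T_i = number of times u \<ge> 0 at which
player i is still pending after u slots (= slot of her success; infinite if never).\<close>
definition exp_latency :: "nat \<Rightarrow> nat \<Rightarrow> (nat \<Rightarrow> protocol) \<Rightarrow> nat \<Rightarrow> ennreal" where
  "exp_latency k n \<sigma> i =
     (\<Sum>u. ennreal (measure_pmf.prob (state_at k n \<sigma> u) {s. s i \<noteq> None}))"

definition cond_latency :: "nat \<Rightarrow> nat \<Rightarrow> (nat \<Rightarrow> protocol) \<Rightarrow> nat \<Rightarrow> nat list \<Rightarrow> ennreal" where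
  "cond_latency k n \<sigma> i h =
     of_nat (length h) +
     (\<Sum>m. ennreal (measure_pmf.prob
        (run k n \<sigma> (cond_pmf (state_at k n \<sigma> (length h)) {s. s i = Some h}) m)
        {s. s i \<noteq> None}))"

definition all_use :: "protocol \<Rightarrow> nat \<Rightarrow> protocol" where
  "all_use f = (\<lambda>j. f)"

text \<open>Player i unilaterally deviates to g from slot length h + 1 on
(before that slot she follows f).\<close>
definition deviate :: "protocol \<Rightarrow> nat \<Rightarrow> nat list \<Rightarrow> protocol \<Rightarrow> nat \<Rightarrow> protocol" where
  "deviate f i h g = (\<lambda>j. if j = i then (\<lambda>h'. if length h' < length h then f h' else g h') else f)"

definition equilibrium_protocol :: "nat \<Rightarrow> nat \<Rightarrow> protocol \<Rightarrow> bool" where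
  "equilibrium_protocol k n f \<longleftrightarrow> valid_protocol k f \<and>
     (\<forall>i<n. \<forall>h. \<forall>g. valid_protocol k g \<longrightarrow>
        measure_pmf.prob (state_at k n (all_use f) (length h)) {s. s i = Some h} > 0 \<longrightarrow>
        cond_latency k n (all_use f) i h \<le> cond_latency k n (deviate f i h g) i h)"

definition f2 :: protocol where
  "f2 = (\<lambda>h. pmf_of_set {1, 2})"

end

theory Submission
  imports Defs
begin


fun wv :: "nat \<Rightarrow> real" where
  "wv 0 = 1" | "wv (Suc 0) = 2" | "wv (Suc (Suc 0)) = 8/3" | "wv _ = 4"

definition G :: "nat \<Rightarrow> nat \<Rightarrow> nat \<Rightarrow> real" where
  "G y c m = (if y \<in> {1,2} \<and> (y = 1 \<longrightarrow> c = 0) \<and> (y = 2 \<longrightarrow> c = m) then 0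
     else wv (m - (if y \<noteq> 1 \<and> c = 1 then 1 else 0) - (if y \<noteq> 2 \<and> m - c = 1 then 1 else 0)))"

definition EG :: "nat \<Rightarrow> nat \<Rightarrow> real" where
  "EG y m = (\<Sum>c\<in>{..m}. G y c m * ((m choose c) * (1/2)^c * (1 - 1/2)^(m - c)))"

lemma EG_bound:
  assumes "m \<le> 3" "y \<le> 2"
  shows "EG y m \<ge> wv m - 1 \<and> (y \<in> {1,2} \<longrightarrow> EG y m = wv m - 1)"
proof -
  have "m \<in> {0,1,2,3}" "y \<in> {0,1,2}" using assms by auto
  then show ?thesis
    by (auto simp: EG_def G_def atMost_Suc numeral_eq_Suc)
qed



definition nxt :: "nat \<Rightarrow> gstate \<Rightarrow> (nat \<Rightarrow> nat) \<Rightarrow> gstate" where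
  "nxt k s a = (\<lambda>j. case s j of None \<Rightarrow> None
                     | Some h \<Rightarrow> if succeeds k s a j then None else Some (h @ [a j]))"

lemma step_nxt: "step k n \<sigma> s = map_pmf (nxt k s) (Pi_pmf {j. j < n \<and> s j \<noteq> None} 0 (\<lambda>j. \<sigma> j (the (s j))))"
  unfolding step_def nxt_def by simp

definition Wf :: "nat \<Rightarrow> nat \<Rightarrow> gstate \<Rightarrow> ennreal" where
  "Wf n i s = (case s i of None \<Rightarrow> 0 | Some _ \<Rightarrow> ennreal (wv (card {j. j<n \<and> j\<noteq>i \<and> s j \<noteq> None})))"

definition wfs :: "nat \<Rightarrow> gstate \<Rightarrow> bool" where
  "wfs n s \<longleftrightarrow> (\<forall>j\<ge>n. s j = None)"

lemma comb:
  assumes wf: "wfs n s" and si: "s i = Some h" and "i < n"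
    and Bdef: "B = {j. j<n \<and> j\<noteq>i \<and> s j\<noteq>None}"
    and fB: "\<forall>j\<in>B. f j \<in> {1,2}" and y: "y \<le> 2"
  shows "Wf n i (nxt 2 s (f(i:=y))) = ennreal (G y (card {j\<in>B. f j = 1}) (card B))"
proof -
  define a where "a = f(i:=y)"
  define S1 where "S1 = {j\<in>B. f j = 1}"
  define S2 where "S2 = {j\<in>B. f j = 2}"
  define c where "c = card S1"
  define m where "m = card B"
  have finB: "finite B" using Bdef by auto
  have iB: "i \<notin> B" using Bdef by auto
  have memB: "\<And>j'. (j' \<noteq> i \<and> s j' \<noteq> None) \<longleftrightarrow> j' \<in> B"
    using wf Bdef unfolding wfs_def by (metis (mono_tags, lifting) mem_Collect_eq not_le)
  have aB: "\<And>j. j \<in> B \<Longrightarrow> a j = f j" using iB a_def by auto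
  have ai: "a i = y" using a_def by simp
  have B12: "B = S1 \<union> S2" "S1 \<inter> S2 = {}" using fB S1_def S2_def by auto
  have fin12: "finite S1" "finite S2" using finB S1_def S2_def by auto
  have cS2: "card S2 = m - c"
    using B12 fin12 card_Un_disjoint[of S1 S2] unfolding m_def c_def by simp
  have succ_i: "succeeds 2 s a i \<longleftrightarrow> y \<in> {1,2} \<and> (\<forall>j\<in>B. f j \<noteq> y)"
    unfolding succeeds_def using memB aB ai y by auto
  have c0: "(\<forall>j\<in>B. f j \<noteq> 1) \<longleftrightarrow> c = 0"
    unfolding c_def S1_def using finB by auto
  have cm: "(\<forall>j\<in>B. f j \<noteq> 2) \<longleftrightarrow> c = m"
  proof -
    have "(\<forall>j\<in>B. f j \<noteq> 2) \<longleftrightarrow> S2 = {}" using S2_def by auto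
    also have "\<dots> \<longleftrightarrow> card S2 = 0" using fin12 by simp
    also have "\<dots> \<longleftrightarrow> c = m"
    proof -
      have "S1 \<subseteq> B" using S1_def by auto
      then have "c \<le> m" unfolding c_def m_def using finB by (simp add: card_mono)
      then show ?thesis using cS2 by linarith
    qed
    finally show ?thesis .
  qed
  have succ_j: "\<And>j. j \<in> B \<Longrightarrow> succeeds 2 s a j \<longleftrightarrow> y \<noteq> f j \<and> (\<forall>j'\<in>B. j' \<noteq> j \<longrightarrow> f j' \<noteq> f j)"
  proof -
    fix j assume jB: "j \<in> B"
    have ji: "j \<noteq> i" using jB iB by auto
    have aj: "1 \<le> a j \<and> a j \<le> 2" using aB[OF jB] fB jB by fastforce
    have "succeeds 2 s a j \<longleftrightarrow> (\<forall>j'. j' \<noteq> j \<and> s j' \<noteq> None \<longrightarrow> a j' \<noteq> a j)"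
      unfolding succeeds_def using aj by simp
    also have "\<dots> \<longleftrightarrow> y \<noteq> f j \<and> (\<forall>j'\<in>B. j' \<noteq> j \<longrightarrow> f j' \<noteq> f j)"
      using memB aB ai jB ji si by (metis option.distinct(1))
    finally show "succeeds 2 s a j \<longleftrightarrow> y \<noteq> f j \<and> (\<forall>j'\<in>B. j' \<noteq> j \<longrightarrow> f j' \<noteq> f j)" .
  qed
  define X where "X = (if y \<noteq> 1 \<and> c = 1 then S1 else {}) \<union> (if y \<noteq> 2 \<and> m - c = 1 then S2 else {})"
  have Xeq: "{j\<in>B. succeeds 2 s a j} = X"
  proof (rule set_eqI)
    fix j
    show "j \<in> {j\<in>B. succeeds 2 s a j} \<longleftrightarrow> j \<in> X"
    proof (cases "j \<in> B")
      case False
      have "S1 \<subseteq> B" "S2 \<subseteq> B" unfolding S1_def S2_def by auto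
      then have "j \<notin> X" using False unfolding X_def by auto
      then show ?thesis using False by simp
    next
      case True
      have single: "\<And>S v. j \<in> S \<Longrightarrow> finite S \<Longrightarrow> S = {j'\<in>B. f j' = v} \<Longrightarrow>
          ((\<forall>j'\<in>B. j' \<noteq> j \<longrightarrow> f j' \<noteq> v) \<longleftrightarrow> card S = 1)"
      proof -
        fix S v assume jS: "j \<in> S" and "finite S" and Sd: "S = {j'\<in>B. f j' = v}"
        have "(\<forall>j'\<in>B. j' \<noteq> j \<longrightarrow> f j' \<noteq> v) \<longleftrightarrow> S = {j}" using jS unfolding Sd by auto
        also have "\<dots> \<longleftrightarrow> card S = 1" using jS card_1_singleton_iff[of S] by auto
        finally show "(\<forall>j'\<in>B. j' \<noteq> j \<longrightarrow> f j' \<noteq> v) \<longleftrightarrow> card S = 1" .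
      qed
      show ?thesis
      proof (cases "f j = 1")
        case True
        have j1: "j \<in> S1" using True \<open>j\<in>B\<close> S1_def by auto
        have j2: "j \<notin> S2" using True S2_def by auto
        have X1: "j \<in> X \<longleftrightarrow> y \<noteq> 1 \<and> c = 1" using j1 j2 unfolding X_def by auto
        have "j \<in> {j\<in>B. succeeds 2 s a j} \<longleftrightarrow> succeeds 2 s a j" using \<open>j\<in>B\<close> by simp
        also have "\<dots> \<longleftrightarrow> y \<noteq> 1 \<and> (\<forall>j'\<in>B. j' \<noteq> j \<longrightarrow> f j' \<noteq> 1)" using succ_j[OF \<open>j\<in>B\<close>] True by simp
        also have "\<dots> \<longleftrightarrow> y \<noteq> 1 \<and> c = 1" using single[OF j1 fin12(1) S1_def] c_def by simp
        finally show ?thesis using X1 by simp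
      next
        case False
        then have f2: "f j = 2" using fB \<open>j\<in>B\<close> by auto
        have j2: "j \<in> S2" using f2 \<open>j\<in>B\<close> S2_def by auto
        have j1: "j \<notin> S1" using f2 S1_def by auto
        have X1: "j \<in> X \<longleftrightarrow> y \<noteq> 2 \<and> m - c = 1" using j1 j2 unfolding X_def by auto
        have "j \<in> {j\<in>B. succeeds 2 s a j} \<longleftrightarrow> succeeds 2 s a j" using \<open>j\<in>B\<close> by simp
        also have "\<dots> \<longleftrightarrow> y \<noteq> 2 \<and> (\<forall>j'\<in>B. j' \<noteq> j \<longrightarrow> f j' \<noteq> 2)" using succ_j[OF \<open>j\<in>B\<close>] f2 by simp
        also have "\<dots> \<longleftrightarrow> y \<noteq> 2 \<and> m - c = 1" using single[OF j2 fin12(2) S2_def] cS2 by simp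
        finally show ?thesis using X1 by simp
      qed
    qed
  qed
  have cardX: "card X = (if y \<noteq> 1 \<and> c = 1 then 1 else 0) + (if y \<noteq> 2 \<and> m - c = 1 then 1 else 0)"
    unfolding X_def using B12 fin12 cS2 c_def by (auto simp: card_Un_disjoint)
  have "S1 \<subseteq> B" "S2 \<subseteq> B" unfolding S1_def S2_def by auto
  then have XB: "X \<subseteq> B" unfolding X_def by auto
  have cnt: "{j. j<n \<and> j\<noteq>i \<and> nxt 2 s a j \<noteq> None} = B - X"
  proof -
    have "{j. j<n \<and> j\<noteq>i \<and> nxt 2 s a j \<noteq> None} = {j\<in>B. \<not> succeeds 2 s a j}"
      unfolding nxt_def Bdef by (auto split: option.splits)
    also have "\<dots> = B - {j\<in>B. succeeds 2 s a j}" by auto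
    finally show ?thesis using Xeq by simp
  qed
  have cardBX: "card (B - X) = m - card X"
    using card_Diff_subset[OF finite_subset[OF XB finB] XB] m_def by simp
  have nsi: "nxt 2 s a i = (if succeeds 2 s a i then None else Some (h @ [a i]))"
    unfolding nxt_def using si by simp
  show ?thesis
  proof (cases "succeeds 2 s a i")
    case True
    then have "y \<in> {1,2} \<and> (y = 1 \<longrightarrow> c = 0) \<and> (y = 2 \<longrightarrow> c = m)"
      using succ_i c0 cm by auto
    then show ?thesis using True nsi unfolding Wf_def G_def a_def[symmetric] c_def[symmetric] S1_def[symmetric] m_def[symmetric]
      by simp
  next
    case False
    then have "\<not> (y \<in> {1,2} \<and> (y = 1 \<longrightarrow> c = 0) \<and> (y = 2 \<longrightarrow> c = m))"
      using succ_i c0 cm by auto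
    then have Gv: "G y c m = wv (m - (if y \<noteq> 1 \<and> c = 1 then 1 else 0) - (if y \<noteq> 2 \<and> m - c = 1 then 1 else 0))"
      unfolding G_def by (simp only: if_False)
    have "Wf n i (nxt 2 s a) = ennreal (wv (card (B - X)))"
      using False nsi cnt unfolding Wf_def by simp
    also have "card (B - X) = m - (if y \<noteq> 1 \<and> c = 1 then 1 else 0) - (if y \<noteq> 2 \<and> m - c = 1 then 1 else 0)"
      using cardBX cardX by simp
    finally have fin: "Wf n i (nxt 2 s a) = ennreal (wv (m - (if y \<noteq> 1 \<and> c = 1 then 1 else 0) - (if y \<noteq> 2 \<and> m - c = 1 then 1 else 0)))" .
    have e: "f(i:=y) = a" "card {j\<in>B. f j = 1} = c" "card B = m" unfolding a_def c_def S1_def m_def by simp_all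
    show ?thesis unfolding e using fin Gv by (simp only:)
  qed
qed



lemma binom_dist:
  assumes "finite B"
  shows "map_pmf (\<lambda>f. card {j\<in>B. f j = (1::nat)}) (Pi_pmf B 0 (\<lambda>_. pmf_of_set {1,2::nat}))
         = binomial_pmf (card B) (1/2)"
proof -
  define tr :: "bool \<Rightarrow> nat" where "tr = (\<lambda>b. if b then 1 else 2)"
  have tr_img: "tr ` UNIV = {1,2}" unfolding tr_def by (auto simp: UNIV_bool)
  have "map_pmf tr (pmf_of_set UNIV) = pmf_of_set (tr ` UNIV)"
    by (rule map_pmf_of_set_inj) (auto simp: inj_on_def tr_def)
  then have "map_pmf tr (bernoulli_pmf (1/2)) = pmf_of_set {1,2}"
    unfolding bernoulli_pmf_half_conv_pmf_of_set tr_img .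
  then have e1: "pmf_of_set {1,2::nat} = map_pmf tr (bernoulli_pmf (1/2))" by simp
  have e2: "Pi_pmf B 2 (\<lambda>_. map_pmf tr (bernoulli_pmf (1/2))) =
      map_pmf (\<lambda>h. tr \<circ> h) (Pi_pmf B False (\<lambda>_. bernoulli_pmf (1/2)))"
    by (rule Pi_pmf_map) (auto simp: assms tr_def)
  have e3: "Pi_pmf B 0 (\<lambda>_. pmf_of_set {1,2::nat}) =
      map_pmf (\<lambda>f x. if x \<in> B then f x else 0) (Pi_pmf B 2 (\<lambda>_. pmf_of_set {1,2::nat}))"
    by (rule Pi_pmf_default_swap[symmetric]) (rule assms)
  have "map_pmf (\<lambda>f. card {j\<in>B. f j = (1::nat)}) (Pi_pmf B 0 (\<lambda>_. pmf_of_set {1,2::nat}))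
      = map_pmf (\<lambda>h. card {j\<in>B. h j}) (Pi_pmf B False (\<lambda>_. bernoulli_pmf (1/2)))"
    unfolding e3 unfolding e1 e2 pmf.map_comp
    by (rule pmf.map_cong) (auto simp: tr_def o_def intro!: arg_cong[where f=card])
  also have "\<dots> = binomial_pmf (card B) (1/2)"
    by (rule binomial_pmf_altdef'[symmetric]) (auto simp: assms)
  finally show ?thesis .
qed

lemma inner_val:
  assumes "finite B" "y \<le> 2"
  shows "(\<integral>\<^sup>+f. ennreal (G y (card {j\<in>B. f j = 1}) (card B)) \<partial>Pi_pmf B 0 (\<lambda>_. pmf_of_set {1,2::nat}))
        = ennreal (EG y (card B))"
proof -
  have "(\<integral>\<^sup>+f. ennreal (G y (card {j\<in>B. f j = 1}) (card B)) \<partial>Pi_pmf B 0 (\<lambda>_. pmf_of_set {1,2::nat}))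
      = (\<integral>\<^sup>+c. ennreal (G y c (card B)) \<partial>map_pmf (\<lambda>f. card {j\<in>B. f j = (1::nat)}) (Pi_pmf B 0 (\<lambda>_. pmf_of_set {1,2::nat})))"
    by simp
  also have "\<dots> = (\<integral>\<^sup>+c. ennreal (G y c (card B)) \<partial>binomial_pmf (card B) (1/2))"
    by (simp only: binom_dist[OF assms(1)])
  also have "\<dots> = (\<Sum>c\<in>{..card B}. ennreal (G y c (card B)) * ennreal (pmf (binomial_pmf (card B) (1/2)) c))"
    by (subst nn_integral_measure_pmf_finite) auto
  also have "\<dots> = ennreal (EG y (card B))"
  proof -
    have Gnn: "\<And>c. G y c m \<ge> 0" for m
    proof -
      fix c
      have "\<And>k. wv k \<ge> 0" by (case_tac k rule: wv.cases) auto
      then show "G y c m \<ge> 0" unfolding G_def by auto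
    qed
    show ?thesis unfolding EG_def
      by (subst sum_ennreal[symmetric]) (auto simp: ennreal_mult' Gnn intro!: sum.cong)
  qed
  finally show ?thesis .
qed



lemma wv_ge1: "wv k \<ge> 1" by (cases k rule: wv.cases) auto

lemma step_int:
  assumes n: "n \<le> 4" "i < n" and wf: "wfs n s" and si: "s i = Some h"
    and oth: "\<forall>j. j \<noteq> i \<longrightarrow> \<sigma> j = f2" and vi: "set_pmf (\<sigma> i h) \<subseteq> {0..2}"
  shows "(\<integral>\<^sup>+x. Wf n i x \<partial>step 2 n \<sigma> s) =
      (\<integral>\<^sup>+y. ennreal (EG y (card {j. j<n \<and> j\<noteq>i \<and> s j\<noteq>None})) \<partial>\<sigma> i h)"
proof -
  define B where "B = {j. j<n \<and> j\<noteq>i \<and> s j\<noteq>None}"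
  define q where "q = (\<lambda>j. \<sigma> j (the (s j)))"
  have finB: "finite B" unfolding B_def by auto
  have iB: "i \<notin> B" unfolding B_def by auto
  have A: "{j. j<n \<and> s j \<noteq> None} = insert i B" unfolding B_def using si n by auto
  have qi: "q i = \<sigma> i h" unfolding q_def si by simp
  have PiB': "Pi_pmf B 0 q = Pi_pmf B 0 (\<lambda>_. pmf_of_set {1,2::nat})"
  proof (rule Pi_pmf_cong)
    fix x assume "x \<in> B"
    then have "x \<noteq> i" using iB by auto
    then show "q x = pmf_of_set {1,2}" unfolding q_def using oth by (simp add: f2_def)
  qed auto
  have "(\<integral>\<^sup>+x. Wf n i x \<partial>step 2 n \<sigma> s) = (\<integral>\<^sup>+a. Wf n i (nxt 2 s a) \<partial>Pi_pmf (insert i B) 0 q)"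
    unfolding step_nxt A q_def by simp
  also have "\<dots> = (\<integral>\<^sup>+p. Wf n i (nxt 2 s ((snd p)(i := fst p))) \<partial>pair_pmf (q i) (Pi_pmf B 0 q))"
    by (simp add: Pi_pmf_insert[OF finB iB] case_prod_beta)
  also have "\<dots> = (\<integral>\<^sup>+y. \<integral>\<^sup>+f. Wf n i (nxt 2 s (f(i := y))) \<partial>Pi_pmf B 0 (\<lambda>_. pmf_of_set {1,2::nat}) \<partial>\<sigma> i h)"
    by (simp add: nn_integral_pair_pmf' qi PiB')
  also have "\<dots> = (\<integral>\<^sup>+y. ennreal (EG y (card B)) \<partial>\<sigma> i h)"
  proof (rule nn_integral_cong_AE, rule AE_pmfI)
    fix y assume y: "y \<in> set_pmf (\<sigma> i h)"
    then have y2: "y \<le> 2" using vi by auto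
    have "(\<integral>\<^sup>+f. Wf n i (nxt 2 s (f(i := y))) \<partial>Pi_pmf B 0 (\<lambda>_. pmf_of_set {1,2::nat}))
        = (\<integral>\<^sup>+f. ennreal (G y (card {j\<in>B. f j = 1}) (card B)) \<partial>Pi_pmf B 0 (\<lambda>_. pmf_of_set {1,2::nat}))"
    proof (rule nn_integral_cong_AE, rule AE_pmfI)
      fix f assume "f \<in> set_pmf (Pi_pmf B 0 (\<lambda>_. pmf_of_set {1,2::nat}))"
      then have "\<forall>j\<in>B. f j \<in> {1,2}" by (simp add: set_Pi_pmf[OF finB] PiE_dflt_def)
      then show "Wf n i (nxt 2 s (f(i := y))) = ennreal (G y (card {j\<in>B. f j = 1}) (card B))"
        using comb[OF wf si n(2) B_def _ y2] by blast
    qed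
    also have "\<dots> = ennreal (EG y (card B))" by (rule inner_val[OF finB y2])
    finally show "(\<integral>\<^sup>+f. Wf n i (nxt 2 s (f(i := y))) \<partial>Pi_pmf B 0 (\<lambda>_. pmf_of_set {1,2::nat})) = ennreal (EG y (card B))" .
  qed
  finally show ?thesis unfolding B_def .
qed

lemma step_bound:
  assumes n: "n \<le> 4" "i < n" and wf: "wfs n s" and si: "s i = Some h"
    and oth: "\<forall>j. j \<noteq> i \<longrightarrow> \<sigma> j = f2" and vi: "set_pmf (\<sigma> i h) \<subseteq> {0..2}"
  shows "Wf n i s \<le> (\<integral>\<^sup>+x. Wf n i x \<partial>step 2 n \<sigma> s) + 1"
    and "set_pmf (\<sigma> i h) \<subseteq> {1,2} \<Longrightarrow> Wf n i s = (\<integral>\<^sup>+x. Wf n i x \<partial>step 2 n \<sigma> s) + 1"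
proof -
  define m where "m = card {j. j<n \<and> j\<noteq>i \<and> s j\<noteq>None}"
  have "{j. j<n \<and> j\<noteq>i \<and> s j\<noteq>None} \<subseteq> {..<n} - {i}" by auto
  then have "m \<le> card ({..<n} - {i})" unfolding m_def by (intro card_mono) auto
  also have "\<dots> = n - 1" using n by simp
  finally have m3: "m \<le> 3" using n by simp
  have "ennreal (wv m) = ennreal ((wv m - 1) + 1)" by simp
  also have "\<dots> = ennreal (wv m - 1) + ennreal 1" using wv_ge1[of m] by (intro ennreal_plus) auto
  finally have Ws: "Wf n i s = ennreal (wv m - 1) + 1" unfolding Wf_def si m_def by simp
  have I: "(\<integral>\<^sup>+x. Wf n i x \<partial>step 2 n \<sigma> s) = (\<integral>\<^sup>+y. ennreal (EG y m) \<partial>\<sigma> i h)"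
    unfolding m_def by (rule step_int[OF assms])
  have "(\<integral>\<^sup>+y. ennreal (wv m - 1) \<partial>\<sigma> i h) \<le> (\<integral>\<^sup>+y. ennreal (EG y m) \<partial>\<sigma> i h)"
  proof (rule nn_integral_mono_AE, rule AE_pmfI)
    fix y assume "y \<in> set_pmf (\<sigma> i h)"
    then have "y \<le> 2" using vi by auto
    then show "ennreal (wv m - 1) \<le> ennreal (EG y m)" using EG_bound[OF m3] ennreal_leI by blast
  qed
  then have "ennreal (wv m - 1) \<le> (\<integral>\<^sup>+y. ennreal (EG y m) \<partial>\<sigma> i h)"
    by (simp add: measure_pmf.emeasure_space_1)
  then show "Wf n i s \<le> (\<integral>\<^sup>+x. Wf n i x \<partial>step 2 n \<sigma> s) + 1"
    unfolding Ws I by (simp add: add_right_mono)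
  assume v12: "set_pmf (\<sigma> i h) \<subseteq> {1,2}"
  have "(\<integral>\<^sup>+y. ennreal (EG y m) \<partial>\<sigma> i h) = (\<integral>\<^sup>+y. ennreal (wv m - 1) \<partial>\<sigma> i h)"
  proof (rule nn_integral_cong_AE, rule AE_pmfI)
    fix y assume "y \<in> set_pmf (\<sigma> i h)"
    then have "y \<in> {1,2}" "y \<le> 2" using v12 by auto
    then show "ennreal (EG y m) = ennreal (wv m - 1)" using EG_bound[OF m3] by metis
  qed
  then have "(\<integral>\<^sup>+y. ennreal (EG y m) \<partial>\<sigma> i h) = ennreal (wv m - 1)"
    by (simp add: measure_pmf.emeasure_space_1)
  then show "Wf n i s = (\<integral>\<^sup>+x. Wf n i x \<partial>step 2 n \<sigma> s) + 1"
    unfolding Ws I by simp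
qed



lemma wf_step: "wfs n s \<Longrightarrow> x \<in> set_pmf (step k n \<sigma> s) \<Longrightarrow> wfs n x"
  unfolding step_nxt wfs_def nxt_def by auto

lemma none_step: "s i = None \<Longrightarrow> x \<in> set_pmf (step k n \<sigma> s) \<Longrightarrow> x i = None"
  unfolding step_nxt nxt_def by auto

lemma wf_run: "set_pmf p \<subseteq> {s. wfs n s} \<Longrightarrow> set_pmf (run k n \<sigma> p m) \<subseteq> {s. wfs n s}"
  by (induction m) (auto dest: wf_step)

lemma hist_len: "x \<in> set_pmf (state_at k n \<sigma> u) \<Longrightarrow> x j = Some h' \<Longrightarrow> length h' = u"
proof (induction u arbitrary: x j h')
  case 0
  then show ?case by (simp add: state_at_def init_state_def split: if_splits)
next
  case (Suc u)
  then obtain s where s: "s \<in> set_pmf (state_at k n \<sigma> u)" "x \<in> set_pmf (step k n \<sigma> s)"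
    by (auto simp: state_at_def)
  then obtain a where "x = nxt k s a" unfolding step_nxt by auto
  with Suc.prems(2) obtain h0 where "s j = Some h0" "h' = h0 @ [a j]"
    unfolding nxt_def by (auto split: option.splits if_splits)
  with Suc.IH[OF s(1)] show ?case by simp
qed


lemma step_comb:
  assumes n: "n \<le> 4" "i < n" and wf: "wfs n s"
    and oth: "\<forall>j. j \<noteq> i \<longrightarrow> \<sigma> j = f2" and vi: "valid_protocol 2 (\<sigma> i)"
  shows "Wf n i s \<le> (\<integral>\<^sup>+x. Wf n i x \<partial>step 2 n \<sigma> s) + indicator {s. s i \<noteq> None} s"
    and "\<forall>h. set_pmf (\<sigma> i h) \<subseteq> {1,2} \<Longrightarrow> Wf n i s = (\<integral>\<^sup>+x. Wf n i x \<partial>step 2 n \<sigma> s) + indicator {s. s i \<noteq> None} s"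
proof -
  have vi': "\<And>h. set_pmf (\<sigma> i h) \<subseteq> {0..2}" using vi unfolding valid_protocol_def by auto
  have "Wf n i s \<le> (\<integral>\<^sup>+x. Wf n i x \<partial>step 2 n \<sigma> s) + indicator {s. s i \<noteq> None} s
     \<and> ((\<forall>h. set_pmf (\<sigma> i h) \<subseteq> {1,2}) \<longrightarrow> Wf n i s = (\<integral>\<^sup>+x. Wf n i x \<partial>step 2 n \<sigma> s) + indicator {s. s i \<noteq> None} s)"
  proof (cases "s i")
    case None
    have "(\<integral>\<^sup>+x. Wf n i x \<partial>step 2 n \<sigma> s) = (\<integral>\<^sup>+x. 0 \<partial>step 2 n \<sigma> s)"
      by (rule nn_integral_cong_AE, rule AE_pmfI) (auto simp: Wf_def dest: none_step[of s i, OF None])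
    then show ?thesis using None by (simp add: Wf_def)
  next
    case (Some h)
    show ?thesis using step_bound[OF n wf Some oth vi'] Some by simp
  qed
  then show "Wf n i s \<le> (\<integral>\<^sup>+x. Wf n i x \<partial>step 2 n \<sigma> s) + indicator {s. s i \<noteq> None} s"
    and "\<forall>h. set_pmf (\<sigma> i h) \<subseteq> {1,2} \<Longrightarrow> Wf n i s = (\<integral>\<^sup>+x. Wf n i x \<partial>step 2 n \<sigma> s) + indicator {s. s i \<noteq> None} s"
    by auto
qed



lemma Wf_le4: "Wf n i s \<le> 4 * indicator {s. s i \<noteq> None} s"
proof -
  have "\<And>k. wv k \<le> 4" by (case_tac k rule: wv.cases) auto
  then have "\<And>k. ennreal (wv k) \<le> 4" using ennreal_leI[of _ 4] by (metis ennreal_numeral)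
  then show ?thesis unfolding Wf_def by (auto split: option.splits)
qed

lemma run_bound:
  assumes n: "n \<le> 4" "i < n" and wfp: "set_pmf p \<subseteq> {s. wfs n s}"
    and oth: "\<forall>j. j \<noteq> i \<longrightarrow> \<sigma> j = f2" and vi: "valid_protocol 2 (\<sigma> i)"
  shows "(\<integral>\<^sup>+x. Wf n i x \<partial>p) \<le> (\<Sum>m<M. emeasure (run 2 n \<sigma> p m) {s. s i \<noteq> None}) + (\<integral>\<^sup>+x. Wf n i x \<partial>run 2 n \<sigma> p M)"
   and "\<forall>h. set_pmf (\<sigma> i h) \<subseteq> {1,2} \<Longrightarrow>
     (\<integral>\<^sup>+x. Wf n i x \<partial>p) = (\<Sum>m<M. emeasure (run 2 n \<sigma> p m) {s. s i \<noteq> None}) + (\<integral>\<^sup>+x. Wf n i x \<partial>run 2 n \<sigma> p M)"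
proof -
  have one: "(\<integral>\<^sup>+x. Wf n i x \<partial>run 2 n \<sigma> p m) \<le> emeasure (run 2 n \<sigma> p m) {s. s i \<noteq> None} + (\<integral>\<^sup>+x. Wf n i x \<partial>run 2 n \<sigma> p (Suc m))
     \<and> ((\<forall>h. set_pmf (\<sigma> i h) \<subseteq> {1,2}) \<longrightarrow> (\<integral>\<^sup>+x. Wf n i x \<partial>run 2 n \<sigma> p m) = emeasure (run 2 n \<sigma> p m) {s. s i \<noteq> None} + (\<integral>\<^sup>+x. Wf n i x \<partial>run 2 n \<sigma> p (Suc m)))" for m
  proof -
    have wfr: "\<And>s. s \<in> set_pmf (run 2 n \<sigma> p m) \<Longrightarrow> wfs n s" using wf_run[OF wfp] by blast
    have R: "emeasure (run 2 n \<sigma> p m) {s. s i \<noteq> None} + (\<integral>\<^sup>+x. Wf n i x \<partial>run 2 n \<sigma> p (Suc m))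
        = (\<integral>\<^sup>+s. ((\<integral>\<^sup>+x. Wf n i x \<partial>step 2 n \<sigma> s) + indicator {s. s i \<noteq> None} s) \<partial>run 2 n \<sigma> p m)"
      by (simp add: nn_integral_add add.commute)
    have "(\<integral>\<^sup>+x. Wf n i x \<partial>run 2 n \<sigma> p m) \<le> (\<integral>\<^sup>+s. ((\<integral>\<^sup>+x. Wf n i x \<partial>step 2 n \<sigma> s) + indicator {s. s i \<noteq> None} s) \<partial>run 2 n \<sigma> p m)"
      by (rule nn_integral_mono_AE, rule AE_pmfI) (rule step_comb(1)[OF n wfr oth vi])
    moreover have "(\<forall>h. set_pmf (\<sigma> i h) \<subseteq> {1,2}) \<longrightarrow> (\<integral>\<^sup>+x. Wf n i x \<partial>run 2 n \<sigma> p m) = (\<integral>\<^sup>+s. ((\<integral>\<^sup>+x. Wf n i x \<partial>step 2 n \<sigma> s) + indicator {s. s i \<noteq> None} s) \<partial>run 2 n \<sigma> p m)"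
      by (intro impI nn_integral_cong_AE AE_pmfI step_comb(2)[OF n _ oth vi]) (auto dest: wfr)
    ultimately show ?thesis unfolding R by simp
  qed
  have "(\<integral>\<^sup>+x. Wf n i x \<partial>p) \<le> (\<Sum>m<M. emeasure (run 2 n \<sigma> p m) {s. s i \<noteq> None}) + (\<integral>\<^sup>+x. Wf n i x \<partial>run 2 n \<sigma> p M)
    \<and> ((\<forall>h. set_pmf (\<sigma> i h) \<subseteq> {1,2}) \<longrightarrow> (\<integral>\<^sup>+x. Wf n i x \<partial>p) = (\<Sum>m<M. emeasure (run 2 n \<sigma> p m) {s. s i \<noteq> None}) + (\<integral>\<^sup>+x. Wf n i x \<partial>run 2 n \<sigma> p M))"
  proof (induction M)
    case 0
    then show ?case by simp
  next
    case (Suc M)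
    have "(\<Sum>m<M. emeasure (run 2 n \<sigma> p m) {s. s i \<noteq> None}) + (\<integral>\<^sup>+x. Wf n i x \<partial>run 2 n \<sigma> p M)
       \<le> (\<Sum>m<M. emeasure (run 2 n \<sigma> p m) {s. s i \<noteq> None}) + (emeasure (run 2 n \<sigma> p M) {s. s i \<noteq> None} + (\<integral>\<^sup>+x. Wf n i x \<partial>run 2 n \<sigma> p (Suc M)))"
      using one[of M] by (simp add: add_left_mono)
    also have "\<dots> = (\<Sum>m<Suc M. emeasure (run 2 n \<sigma> p m) {s. s i \<noteq> None}) + (\<integral>\<^sup>+x. Wf n i x \<partial>run 2 n \<sigma> p (Suc M))"
      by (simp add: add.assoc)
    finally have A: "(\<integral>\<^sup>+x. Wf n i x \<partial>p) \<le> (\<Sum>m<Suc M. emeasure (run 2 n \<sigma> p m) {s. s i \<noteq> None}) + (\<integral>\<^sup>+x. Wf n i x \<partial>run 2 n \<sigma> p (Suc M))"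
      using Suc.IH order_trans by blast
    have B: "(\<integral>\<^sup>+x. Wf n i x \<partial>p) = (\<Sum>m<Suc M. emeasure (run 2 n \<sigma> p m) {s. s i \<noteq> None}) + (\<integral>\<^sup>+x. Wf n i x \<partial>run 2 n \<sigma> p (Suc M))"
      if Q: "\<forall>h. set_pmf (\<sigma> i h) \<subseteq> {1,2}"
    proof -
      have "(\<integral>\<^sup>+x. Wf n i x \<partial>p) = (\<Sum>m<M. emeasure (run 2 n \<sigma> p m) {s. s i \<noteq> None}) + (\<integral>\<^sup>+x. Wf n i x \<partial>run 2 n \<sigma> p M)"
        using Suc.IH Q by blast
      also have "\<dots> = (\<Sum>m<M. emeasure (run 2 n \<sigma> p m) {s. s i \<noteq> None}) + (emeasure (run 2 n \<sigma> p M) {s. s i \<noteq> None} + (\<integral>\<^sup>+x. Wf n i x \<partial>run 2 n \<sigma> p (Suc M)))"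
        using one[of M] Q by metis
      also have "\<dots> = (\<Sum>m<Suc M. emeasure (run 2 n \<sigma> p m) {s. s i \<noteq> None}) + (\<integral>\<^sup>+x. Wf n i x \<partial>run 2 n \<sigma> p (Suc M))"
        by (simp add: add.assoc)
      finally show ?thesis .
    qed
    show ?case using A B by blast
  qed
  then show "(\<integral>\<^sup>+x. Wf n i x \<partial>p) \<le> (\<Sum>m<M. emeasure (run 2 n \<sigma> p m) {s. s i \<noteq> None}) + (\<integral>\<^sup>+x. Wf n i x \<partial>run 2 n \<sigma> p M)"
   and "\<forall>h. set_pmf (\<sigma> i h) \<subseteq> {1,2} \<Longrightarrow>
     (\<integral>\<^sup>+x. Wf n i x \<partial>p) = (\<Sum>m<M. emeasure (run 2 n \<sigma> p m) {s. s i \<noteq> None}) + (\<integral>\<^sup>+x. Wf n i x \<partial>run 2 n \<sigma> p M)"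
    by auto
qed

lemma tail_lim:
  fixes P :: "nat \<Rightarrow> real" and c :: ennreal
  assumes nn: "\<And>m. P m \<ge> 0" and H: "\<And>M. c \<le> (\<Sum>m<M. ennreal (P m)) + 4 * ennreal (P M)"
  shows "c \<le> (\<Sum>m. ennreal (P m))"
proof (cases "(\<Sum>m. ennreal (P m)) = top")
  case True then show ?thesis by simp
next
  case False
  then have sP: "summable P" using summable_suminf_not_top nn by blast
  then have "P \<longlonglongrightarrow> 0" by (rule summable_LIMSEQ_zero)
  then have "(\<lambda>M. ennreal (P M)) \<longlonglongrightarrow> ennreal 0" by (rule tendsto_ennrealI)
  then have t2: "(\<lambda>M. 4 * ennreal (P M)) \<longlonglongrightarrow> 4 * 0"
    by (intro tendsto_mult_ennreal) (auto)
  have t1: "(\<lambda>M. \<Sum>m<M. ennreal (P m)) \<longlonglongrightarrow> (\<Sum>m. ennreal (P m))"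
    by (rule summable_LIMSEQ) (rule summableI)
  have "(\<lambda>M. (\<Sum>m<M. ennreal (P m)) + 4 * ennreal (P M)) \<longlonglongrightarrow> (\<Sum>m. ennreal (P m)) + 4 * 0"
    by (rule tendsto_add[OF t1 t2])
  then have "c \<le> (\<Sum>m. ennreal (P m)) + 4 * 0" by (rule LIMSEQ_le_const) (use H in auto)
  then show ?thesis by simp
qed



lemma lat_bound:
  assumes n: "n \<le> 4" "i < n" and wfp: "set_pmf p \<subseteq> {s. wfs n s}"
    and oth: "\<forall>j. j \<noteq> i \<longrightarrow> \<sigma> j = f2" and vi: "valid_protocol 2 (\<sigma> i)"
  shows "(\<integral>\<^sup>+x. Wf n i x \<partial>p) \<le> (\<Sum>m. ennreal (measure_pmf.prob (run 2 n \<sigma> p m) {s. s i \<noteq> None}))"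
    and "\<forall>h. set_pmf (\<sigma> i h) \<subseteq> {1,2} \<Longrightarrow>
      (\<Sum>m. ennreal (measure_pmf.prob (run 2 n \<sigma> p m) {s. s i \<noteq> None})) = (\<integral>\<^sup>+x. Wf n i x \<partial>p)"
proof -
  define P where "P m = measure_pmf.prob (run 2 n \<sigma> p m) {s. s i \<noteq> None}" for m
  have EP: "emeasure (run 2 n \<sigma> p m) {s. s i \<noteq> None} = ennreal (P m)" for m
    unfolding P_def by (simp add: measure_pmf.emeasure_eq_measure)
  have N4: "(\<integral>\<^sup>+x. Wf n i x \<partial>run 2 n \<sigma> p M) \<le> 4 * ennreal (P M)" for M
  proof -
    have "(\<integral>\<^sup>+x. Wf n i x \<partial>run 2 n \<sigma> p M) \<le> (\<integral>\<^sup>+x. 4 * indicator {s. s i \<noteq> None} x \<partial>run 2 n \<sigma> p M)"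
      by (rule nn_integral_mono) (rule Wf_le4)
    also have "\<dots> = 4 * emeasure (run 2 n \<sigma> p M) {s. s i \<noteq> None}"
      by (rule nn_integral_cmult_indicator) simp
    finally show ?thesis unfolding EP .
  qed
  have "(\<integral>\<^sup>+x. Wf n i x \<partial>p) \<le> (\<Sum>m. ennreal (P m))"
  proof (rule tail_lim)
    fix M
    have "(\<integral>\<^sup>+x. Wf n i x \<partial>p) \<le> (\<Sum>m<M. ennreal (P m)) + (\<integral>\<^sup>+x. Wf n i x \<partial>run 2 n \<sigma> p M)"
      using run_bound(1)[OF n wfp oth vi, of M] unfolding EP .
    also have "\<dots> \<le> (\<Sum>m<M. ennreal (P m)) + 4 * ennreal (P M)"
      using N4[of M] by (rule add_left_mono)
    finally show "(\<integral>\<^sup>+x. Wf n i x \<partial>p) \<le> (\<Sum>m<M. ennreal (P m)) + 4 * ennreal (P M)" .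
  qed (simp add: P_def)
  then show "(\<integral>\<^sup>+x. Wf n i x \<partial>p) \<le> (\<Sum>m. ennreal (measure_pmf.prob (run 2 n \<sigma> p m) {s. s i \<noteq> None}))"
    unfolding P_def .
  assume Q: "\<forall>h. set_pmf (\<sigma> i h) \<subseteq> {1,2}"
  have "(\<Sum>m. ennreal (P m)) \<le> (\<integral>\<^sup>+x. Wf n i x \<partial>p)"
  proof (rule LIMSEQ_le_const2)
    show "(\<lambda>M. \<Sum>m<M. ennreal (P m)) \<longlonglongrightarrow> (\<Sum>m. ennreal (P m))"
      by (rule summable_LIMSEQ) (rule summableI)
    show "\<exists>N. \<forall>M\<ge>N. (\<Sum>m<M. ennreal (P m)) \<le> (\<integral>\<^sup>+x. Wf n i x \<partial>p)"
    proof (intro exI allI impI)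
      fix M
      have "(\<integral>\<^sup>+x. Wf n i x \<partial>p) = (\<Sum>m<M. ennreal (P m)) + (\<integral>\<^sup>+x. Wf n i x \<partial>run 2 n \<sigma> p M)"
        using run_bound(2)[OF n wfp oth vi Q, of M] unfolding EP .
      then show "(\<Sum>m<M. ennreal (P m)) \<le> (\<integral>\<^sup>+x. Wf n i x \<partial>p)" by (metis le_iff_add)
    qed
  qed
  with \<open>(\<integral>\<^sup>+x. Wf n i x \<partial>p) \<le> (\<Sum>m. ennreal (P m))\<close>
  show "(\<Sum>m. ennreal (measure_pmf.prob (run 2 n \<sigma> p m) {s. s i \<noteq> None})) = (\<integral>\<^sup>+x. Wf n i x \<partial>p)"
    unfolding P_def by (rule antisym[rotated])
qed

lemma set_f2: "set_pmf (f2 h) = {1,2}"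
  unfolding f2_def by (simp add: set_pmf_of_set)

lemma valid_f2: "valid_protocol 2 f2"
  unfolding valid_protocol_def set_f2 by auto

lemma init_wf: "wfs n (init_state n)"
  unfolding wfs_def init_state_def by auto

lemma state_wf: "set_pmf (state_at k n \<sigma> u) \<subseteq> {s. wfs n s}"
  unfolding state_at_def by (rule wf_run) (simp add: init_wf)

lemma state_eq:
  "u \<le> length h \<Longrightarrow> state_at 2 n (deviate f2 i h g) u = state_at 2 n (all_use f2) u"
proof (induction u)
  case 0
  then show ?case by (simp add: state_at_def)
next
  case (Suc u)
  have IH: "state_at 2 n (deviate f2 i h g) u = state_at 2 n (all_use f2) u" using Suc by simp
  have "bind_pmf (state_at 2 n (deviate f2 i h g) u) (step 2 n (deviate f2 i h g))
      = bind_pmf (state_at 2 n (all_use f2) u) (step 2 n (all_use f2))"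
    unfolding IH
  proof (rule bind_pmf_cong[OF refl])
    fix s assume s: "s \<in> set_pmf (state_at 2 n (all_use f2) u)"
    have "Pi_pmf {j. j < n \<and> s j \<noteq> None} 0 (\<lambda>j. deviate f2 i h g j (the (s j)))
        = Pi_pmf {j. j < n \<and> s j \<noteq> None} 0 (\<lambda>j. all_use f2 j (the (s j)))"
    proof (rule Pi_pmf_cong)
      fix j assume "j \<in> {j. j < n \<and> s j \<noteq> None}"
      then obtain h' where h': "s j = Some h'" by auto
      have "length h' = u" by (rule hist_len[OF s h'])
      then show "deviate f2 i h g j (the (s j)) = all_use f2 j (the (s j))"
        using Suc.prems h' unfolding deviate_def all_use_def by auto
    qed auto
    then show "step 2 n (deviate f2 i h g) s = step 2 n (all_use f2) s"
      unfolding step_def by simp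
  qed
  then show ?case unfolding state_at_def by simp
qed

lemma Wf_init: "i < n \<Longrightarrow> Wf n i (init_state n) = ennreal (wv (n - 1))"
proof -
  assume "i < n"
  have "{j. j<n \<and> j\<noteq>i \<and> init_state n j \<noteq> None} = {..<n} - {i}"
    unfolding init_state_def by auto
  then have "card {j. j<n \<and> j\<noteq>i \<and> init_state n j \<noteq> None} = n - 1" using \<open>i<n\<close> by simp
  then show ?thesis unfolding Wf_def using \<open>i<n\<close> by (simp add: init_state_def)
qed

lemma main_n:
  assumes n: "n \<le> 4"
  shows "equilibrium_protocol 2 n f2 \<and> (\<forall>i<n. exp_latency 2 n (all_use f2) i = ennreal (wv (n - 1)))"
proof
  show "\<forall>i<n. exp_latency 2 n (all_use f2) i = ennreal (wv (n - 1))"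
  proof (intro allI impI)
    fix i assume i: "i < n"
    have "exp_latency 2 n (all_use f2) i = (\<integral>\<^sup>+x. Wf n i x \<partial>return_pmf (init_state n))"
      unfolding exp_latency_def state_at_def
      by (rule lat_bound(2)[OF n i]) (auto simp: init_wf all_use_def valid_f2 set_f2)
    also have "\<dots> = ennreal (wv (n - 1))" using Wf_init[OF i] by (simp add: nn_integral_return)
    finally show "exp_latency 2 n (all_use f2) i = ennreal (wv (n - 1))" .
  qed
  show "equilibrium_protocol 2 n f2"
    unfolding equilibrium_protocol_def
  proof (intro conjI valid_f2 allI impI)
    fix i h g
    assume i: "i < n" and vg: "valid_protocol 2 g"
      and pos: "0 < measure_pmf.prob (state_at 2 n (all_use f2) (length h)) {s. s i = Some h}"
    define p where "p = cond_pmf (state_at 2 n (all_use f2) (length h)) {s. s i = Some h}"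
    have ne: "set_pmf (state_at 2 n (all_use f2) (length h)) \<inter> {s. s i = Some h} \<noteq> {}"
    proof -
      have "measure_pmf.prob (state_at 2 n (all_use f2) (length h)) {s. s i = Some h} \<noteq> 0" using pos by simp
      then show ?thesis by (metis measure_pmf_zero_iff)
    qed
    have wfp: "set_pmf p \<subseteq> {s. wfs n s}"
      unfolding p_def set_cond_pmf[OF ne] using state_wf[of 2 n "all_use f2" "length h"] by blast
    have eqa: "cond_latency 2 n (all_use f2) i h = of_nat (length h) + (\<integral>\<^sup>+x. Wf n i x \<partial>p)"
      unfolding cond_latency_def p_def[symmetric]
      by (subst lat_bound(2)[OF n i wfp]) (auto simp: all_use_def valid_f2 set_f2)
    have vd: "valid_protocol 2 (deviate f2 i h g i)"
      using vg valid_f2 unfolding valid_protocol_def deviate_def by auto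
    have "(\<integral>\<^sup>+x. Wf n i x \<partial>p) \<le> (\<Sum>m. ennreal (measure_pmf.prob (run 2 n (deviate f2 i h g) p m) {s. s i \<noteq> None}))"
      by (rule lat_bound(1)[where \<sigma>="deviate f2 i h g", OF n i wfp _ vd]) (auto simp: deviate_def)
    moreover have "cond_latency 2 n (deviate f2 i h g) i h = of_nat (length h) +
        (\<Sum>m. ennreal (measure_pmf.prob (run 2 n (deviate f2 i h g) p m) {s. s i \<noteq> None}))"
      unfolding cond_latency_def p_def state_eq[OF le_refl] ..
    ultimately show "cond_latency 2 n (all_use f2) i h \<le> cond_latency 2 n (deviate f2 i h g) i h"
      unfolding eqa by (simp add: add_left_mono)
  qed
qed

theorem theorem3:
  shows "equilibrium_protocol 2 2 f2 \<and> equilibrium_protocol 2 3 f2 \<and> equilibrium_protocol 2 4 f2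
    \<and> (\<forall>i<2. exp_latency 2 2 (all_use f2) i = 2)
    \<and> (\<forall>i<3. exp_latency 2 3 (all_use f2) i = 8/3)
    \<and> (\<forall>i<4. exp_latency 2 4 (all_use f2) i = 4)"
proof -
  have w1: "ennreal (wv (2 - 1)) = 2" by (simp add: numeral_eq_Suc)
  have w2: "ennreal (wv (3 - 1)) = 8/3"
    by (simp add: numeral_eq_Suc divide_ennreal[symmetric])
  have w3: "ennreal (wv (4 - 1)) = 4" by (simp add: numeral_eq_Suc)
  show ?thesis using main_n[of 2] main_n[of 3] main_n[of 4] w1 w2 w3 by simp
qed


end
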